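(* For every integer $n\ge 1$, $$\rho(P_n)\le 1+\frac{n(n-1)}{2}-3\left\lfloor \frac{n}{7}\right\rfloor.$$
   Context: $P_n$ denotes the path on $n$ vertices (of length $n-1$). All graphs are finite and simple. A coloring means a proper vertex coloring; an induced subgraph is rainbow if all its vertices have pairwise different colors. $\rho(H)$ is the least number $m$ such that some graph $G$ on $m$ vertices has the property that every proper vertex coloring of $G$ contains a rainbow induced subgraph isomorphic to $H$. *)

theory Defs
  imports Main
begin

definition is_graph :: "nat \<Rightarrow> (nat \<Rightarrow> nat \<Rightarrow> bool) \<Rightarrow> bool" where
  "is_graph m E \<longleftrightarrow> (\<forall>u v. E u v \<longrightarrow> u < m \<and> v < m) \<and> (\<forall>u v. E u v \<longrightarrow> E v u) \<and> (\<forall>u. \<not> E u u)"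

text \<open>Proper vertex colouring (colours are natural numbers; any colouring of a
finite graph can be renamed injectively into nat).\<close>
definition proper_coloring :: "nat \<Rightarrow> (nat \<Rightarrow> nat \<Rightarrow> bool) \<Rightarrow> (nat \<Rightarrow> nat) \<Rightarrow> bool" where
  "proper_coloring m E c \<longleftrightarrow> (\<forall>u<m. \<forall>v<m. E u v \<longrightarrow> c u \<noteq> c v)"

definition has_rainbow_induced_copy ::
  "nat \<Rightarrow> (nat \<Rightarrow> nat \<Rightarrow> bool) \<Rightarrow> nat \<Rightarrow> (nat \<Rightarrow> nat \<Rightarrow> bool) \<Rightarrow> (nat \<Rightarrow> nat) \<Rightarrow> bool" where
  "has_rainbow_induced_copy k EH m E c \<longleftrightarrow>
     (\<exists>f. (\<forall>i<k. f i < m) \<and> inj_on f {..<k} \<and>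
          (\<forall>i<k. \<forall>j<k. E (f i) (f j) \<longleftrightarrow> EH i j) \<and>
          inj_on (c \<circ> f) {..<k})"

definition rho :: "nat \<Rightarrow> (nat \<Rightarrow> nat \<Rightarrow> bool) \<Rightarrow> nat" where
  "rho k EH = (LEAST m. \<exists>E. is_graph m E \<and>
      (\<forall>c. proper_coloring m E c \<longrightarrow> has_rainbow_induced_copy k EH m E c))"

definition path_edge :: "nat \<Rightarrow> nat \<Rightarrow> bool" where
  "path_edge i j \<longleftrightarrow> i + 1 = j \<or> j + 1 = i"

end

theory Submission imports Defs begin
lemma hall:
  fixes I :: "'i set" and A :: "'i \<Rightarrow> 'a set"
  assumes "finite I" "\<forall>i\<in>I. finite (A i)" "\<forall>K\<subseteq>I. card K \<le> card (\<Union>(A ` K))"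
  shows "\<exists>r. (\<forall>i\<in>I. r i \<in> A i) \<and> inj_on r I"
  using assms
proof (induction "card I" arbitrary: I A rule: less_induct)
  case less
  note fin = less.prems(1) and finA = less.prems(2) and H = less.prems(3)
  have finU: "finite (\<Union>(A ` K))" if "K \<subseteq> I" for K
    using that fin finA by (meson finite_UN_I finite_subset subsetD)
  show ?case
  proof (cases "I = {}")
    case True then show ?thesis by auto
  next
    case nonempty: False
    show ?thesis
    proof (cases "\<exists>K. K \<subseteq> I \<and> K \<noteq> {} \<and> K \<noteq> I \<and> card (\<Union>(A ` K)) \<le> card K")
      case True
      then obtain K where K: "K \<subseteq> I" "K \<noteq> {}" "K \<noteq> I" "card (\<Union>(A ` K)) \<le> card K" by blast
      define U where "U = \<Union>(A ` K)"
      have finK: "finite K" using K fin finite_subset by blast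
      have "K \<subset> I" using K(1,3) by blast
      then have "card K < card I" using fin by (simp add: psubset_card_mono)
      then obtain r1 where r1: "\<forall>i\<in>K. r1 i \<in> A i" "inj_on r1 K"
        using less.hyps[OF \<open>card K < card I\<close> finK, of A] finA H K(1) by (meson order_trans subsetD)
      define I' where "I' = I - K"
      define A' where "A' = (\<lambda>i. A i - U)"
      have "card K > 0" using finK K(2) by (simp add: card_gt_0_iff)
      then have "card I' < card I" unfolding I'_def using K(1) finK
        using card_mono[OF fin K(1)] by (simp add: card_Diff_subset)
      moreover have "finite I'" using fin I'_def by auto
      moreover have "\<forall>i\<in>I'. finite (A' i)" using finA I'_def A'_def by auto
      moreover have "\<forall>L\<subseteq>I'. card L \<le> card (\<Union>(A' ` L))"
      proof (intro allI impI)
        fix L assume L: "L \<subseteq> I'"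
        have LK: "L \<inter> K = {}" using L I'_def by auto
        have finL: "finite L" using L \<open>finite I'\<close> finite_subset by blast
        have eq: "\<Union>(A ` (L \<union> K)) = \<Union>(A' ` L) \<union> U" unfolding A'_def U_def by auto
        have disj: "\<Union>(A' ` L) \<inter> U = {}" unfolding A'_def by auto
        have f1: "finite (\<Union>(A' ` L))" using finU[of L] L I'_def A'_def
          by (metis Diff_subset finite_Diff finite_UN finU finL finite_subset le_sup_iff sup.absorb_iff2 UN_mono)
        have f2: "finite U" using finU[OF K(1)] U_def by simp
        have "card L + card K = card (L \<union> K)" using LK finL finK by (simp add: card_Un_disjoint)
        also have "\<dots> \<le> card (\<Union>(A ` (L \<union> K)))" using H L K(1) I'_def by (metis Diff_subset le_sup_iff order_trans)
        also have "\<dots> = card (\<Union>(A' ` L)) + card U" using eq disj f1 f2 by (simp add: card_Un_disjoint)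
        finally show "card L \<le> card (\<Union>(A' ` L))" using K(4) U_def by simp
      qed
      ultimately obtain r2 where r2: "\<forall>i\<in>I'. r2 i \<in> A' i" "inj_on r2 I'"
        using less.hyps[of I' A'] by blast
      define r where "r = (\<lambda>i. if i \<in> K then r1 i else r2 i)"
      have "\<forall>i\<in>I. r i \<in> A i" using r1 r2 unfolding r_def I'_def A'_def by auto
      moreover have "inj_on r I"
      proof (rule inj_onI)
        fix i j assume ij: "i \<in> I" "j \<in> I" "r i = r j"
        show "i = j"
        proof (cases "i \<in> K"; cases "j \<in> K")
          assume "i \<in> K" "j \<in> K" then show ?thesis using ij r1 unfolding r_def by (auto dest: inj_onD)
        next
          assume a: "i \<in> K" "j \<notin> K"
          then have "r i \<in> U" using r1 U_def r_def by auto
          moreover have "r j \<notin> U" using a ij(2) r2(1) unfolding r_def A'_def I'_def by auto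
          ultimately show ?thesis using ij by simp
        next
          assume a: "i \<notin> K" "j \<in> K"
          then have "r j \<in> U" using r1 U_def r_def by auto
          moreover have "r i \<notin> U" using a ij(1) r2(1) unfolding r_def A'_def I'_def by auto
          ultimately show ?thesis using ij by simp
        next
          assume "i \<notin> K" "j \<notin> K" then show ?thesis using ij r2 unfolding r_def I'_def by (auto dest: inj_onD)
        qed
      qed
      ultimately show ?thesis by blast
    next
      case False
      then have strict: "\<And>K. K \<subseteq> I \<Longrightarrow> K \<noteq> {} \<Longrightarrow> K \<noteq> I \<Longrightarrow> card K < card (\<Union>(A ` K))"
        by (meson not_le)
      obtain i0 where i0: "i0 \<in> I" using nonempty by blast
      have "card {i0} \<le> card (A i0)" using H i0 by (metis cSup_singleton empty_subsetI image_empty image_insert insert_subset)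
      then have "A i0 \<noteq> {}" by auto
      then obtain x where x: "x \<in> A i0" by blast
      define I' where "I' = I - {i0}"
      define A' where "A' = (\<lambda>i. A i - {x})"
      have "card I' < card I" unfolding I'_def using i0 fin by (metis card_Diff1_less)
      moreover have "finite I'" using fin I'_def by auto
      moreover have "\<forall>i\<in>I'. finite (A' i)" using finA I'_def A'_def by auto
      moreover have "\<forall>L\<subseteq>I'. card L \<le> card (\<Union>(A' ` L))"
      proof (intro allI impI)
        fix L assume L: "L \<subseteq> I'"
        show "card L \<le> card (\<Union>(A' ` L))"
        proof (cases "L = {}")
          case True then show ?thesis by simp
        next
          case False
          have LI: "L \<subseteq> I" "L \<noteq> I" using L I'_def i0 by auto
          have lt: "card L < card (\<Union>(A ` L))" using strict[OF LI(1) False LI(2)] .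
          have "\<Union>(A' ` L) = \<Union>(A ` L) - {x}" unfolding A'_def by auto
          moreover have "card (\<Union>(A ` L)) - 1 \<le> card (\<Union>(A ` L) - {x})"
            by (metis card_Diff_singleton_if diff_le_self order_refl)
          ultimately show ?thesis using lt by simp
        qed
      qed
      ultimately obtain r' where r': "\<forall>i\<in>I'. r' i \<in> A' i" "inj_on r' I'"
        using less.hyps[of I' A'] by blast
      define r where "r = r'(i0 := x)"
      have "\<forall>i\<in>I. r i \<in> A i" using r' x unfolding r_def I'_def A'_def by auto
      moreover have "inj_on r I"
      proof (rule inj_onI)
        fix i j assume ij: "i \<in> I" "j \<in> I" "r i = r j"
        show "i = j"
        proof (cases "i = i0"; cases "j = i0")
          assume "i = i0" "j \<noteq> i0" then show ?thesis using ij r' unfolding r_def I'_def A'_def by auto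
        next
          assume "i \<noteq> i0" "j = i0" then show ?thesis using ij r' unfolding r_def I'_def A'_def by auto
        next
          assume "i \<noteq> i0" "j \<noteq> i0" then show ?thesis using ij r' unfolding r_def I'_def by (auto dest: inj_onD)
        qed simp
      qed
      ultimately show ?thesis by blast
    qed
  qed
qed

definition lvE :: "nat \<Rightarrow> (nat \<Rightarrow> nat) \<Rightarrow> nat \<Rightarrow> nat \<Rightarrow> bool" where
  "lvE m lv u v \<longleftrightarrow> u < m \<and> v < m \<and> u \<noteq> v \<and> (lv u = lv v \<or> Suc (lv u) = lv v \<or> Suc (lv v) = lv u)"

lemma main:
  fixes n m :: nat and lv s :: "nat \<Rightarrow> nat"
  assumes lv_lt: "\<forall>u<m. lv u < n"
  and sz: "\<forall>j<n. card {u. u<m \<and> lv u = j} = s j"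
  and C: "\<forall>J\<subseteq>{..<n}. J \<noteq> {} \<longrightarrow> (\<exists>j\<in>J. card J \<le> s j) \<or> (\<exists>j\<in>J. Suc j\<in>J \<and> card J \<le> s j + s (Suc j))"
  shows "\<exists>E. is_graph m E \<and> (\<forall>c. proper_coloring m E c \<longrightarrow> has_rainbow_induced_copy n path_edge m E c)"
proof (intro exI conjI allI impI)
  let ?E = "lvE m lv"
  show "is_graph m ?E" unfolding is_graph_def lvE_def by auto
  fix c assume pc: "proper_coloring m ?E c"
  define L where "L = (\<lambda>j. {u. u<m \<and> lv u = j})"
  define S where "S = (\<lambda>j. c ` L j)"
  have finL: "finite (L j)" for j unfolding L_def by simp
  have injL: "inj_on c (L j)" for j
  proof (rule inj_onI)
    fix u v assume a: "u \<in> L j" "v \<in> L j" "c u = c v"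
    show "u = v"
    proof (rule ccontr)
      assume "u \<noteq> v"
      then have "lvE m lv u v" using a unfolding lvE_def L_def by auto
      then show False using pc a(3) a(1,2) unfolding proper_coloring_def L_def by auto
    qed
  qed
  have cardS: "card (S j) = s j" if "j < n" for j
    using sz that injL unfolding S_def L_def by (simp add: card_image)
  have disj: "S j \<inter> S (Suc j) = {}" for j
  proof -
    { fix u v assume a: "u \<in> L j" "v \<in> L (Suc j)" "c u = c v"
      then have "lvE m lv u v" unfolding lvE_def L_def by auto
      then have False using pc a unfolding proper_coloring_def L_def by auto }
    then show ?thesis unfolding S_def by blast
  qed
  have finS: "finite (S j)" for j unfolding S_def using finL by simp
  have hallc: "\<forall>K\<subseteq>{..<n}. card K \<le> card (\<Union>(S ` K))"
  proof (intro allI impI)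
    fix K assume K: "K \<subseteq> {..<n}"
    have finU: "finite (\<Union>(S ` K))" using K finS finite_subset by (metis finite_UN_I finite_lessThan)
    show "card K \<le> card (\<Union>(S ` K))"
    proof (cases "K = {}")
      case True then show ?thesis by simp
    next
      case False
      then consider (a) j where "j \<in> K" "card K \<le> s j" | (b) j where "j \<in> K" "Suc j \<in> K" "card K \<le> s j + s (Suc j)"
        using C K by blast
      then show ?thesis
      proof cases
        case a
        have "card (S j) \<le> card (\<Union>(S ` K))" using a finU by (intro card_mono) auto
        then show ?thesis using a cardS K by auto
      next
        case b
        have "card (S j \<union> S (Suc j)) \<le> card (\<Union>(S ` K))" using b finU by (intro card_mono) auto
        moreover have "card (S j \<union> S (Suc j)) = s j + s (Suc j)"
          using disj finS cardS b K by (simp add: card_Un_disjoint subset_iff)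
        ultimately show ?thesis using b by auto
      qed
    qed
  qed
  have "\<exists>r. (\<forall>j\<in>{..<n}. r j \<in> S j) \<and> inj_on r {..<n}"
    by (rule hall) (use hallc finS in auto)
  then obtain r where r: "\<forall>j\<in>{..<n}. r j \<in> S j" "inj_on r {..<n}" by blast
  define f where "f = (\<lambda>j. SOME u. u \<in> L j \<and> c u = r j)"
  have f: "f j \<in> L j \<and> c (f j) = r j" if "j < n" for j
  proof -
    have "r j \<in> c ` L j" using r(1) that unfolding S_def by auto
    then have "\<exists>u. u \<in> L j \<and> c u = r j" by (metis imageE)
    then show ?thesis unfolding f_def by (rule someI_ex)
  qed
  have cf: "inj_on (c \<circ> f) {..<n}"
    using r(2) f unfolding inj_on_def by simp
  have finj: "inj_on f {..<n}" using cf by (metis comp_inj_on_iff inj_on_imageI2)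
  show "has_rainbow_induced_copy n path_edge m ?E c"
    unfolding has_rainbow_induced_copy_def
  proof (intro exI conjI allI impI)
    fix i assume "i < n" then show "f i < m" using f unfolding L_def by auto
  next
    show "inj_on f {..<n}" by (rule finj)
  next
    fix i j assume ij: "i < n" "j < n"
    have li: "lv (f i) = i" "f i < m" "lv (f j) = j" "f j < m" using f ij unfolding L_def by auto
    have ne: "f i \<noteq> f j \<longleftrightarrow> i \<noteq> j" using finj ij unfolding inj_on_def by auto
    show "?E (f i) (f j) \<longleftrightarrow> path_edge i j"
      unfolding lvE_def path_edge_def using li ne by auto
  next
    show "inj_on (c \<circ> f) {..<n}" by (rule cf)
  qed
qed

lemma lv_exists:
  fixes s :: "nat \<Rightarrow> nat"
  shows "\<exists>lv. (\<forall>u<(\<Sum>j<n. s j). lv u < n) \<and> (\<forall>j<n. card {u. u<(\<Sum>j<n. s j) \<and> lv u = j} = s j)"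
proof (induction n)
  case 0 then show ?case by simp
next
  case (Suc n)
  then obtain lv where lv: "\<forall>u<(\<Sum>j<n. s j). lv u < n" "\<forall>j<n. card {u. u<(\<Sum>j<n. s j) \<and> lv u = j} = s j"
    by blast
  define M where "M = (\<Sum>j<n. s j)"
  define lv' where "lv' = (\<lambda>u. if u < M then lv u else n)"
  have "\<forall>u<M + s n. lv' u < Suc n" using lv unfolding lv'_def M_def by auto
  moreover have "\<forall>j<Suc n. card {u. u<M + s n \<and> lv' u = j} = s j"
  proof (intro allI impI)
    fix j assume j: "j < Suc n"
    show "card {u. u<M + s n \<and> lv' u = j} = s j"
    proof (cases "j < n")
      case True
      have "{u. u<M + s n \<and> lv' u = j} = {u. u<M \<and> lv u = j}"
        using True unfolding lv'_def by auto
      then show ?thesis using lv(2) True M_def by simp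
    next
      case False
      then have jn: "j = n" using j by simp
      have "{u. u<M + s n \<and> lv' u = j} = {M..<M + s n}"
      proof (intro set_eqI iffI)
        fix x assume x: "x \<in> {u. u<M + s n \<and> lv' u = j}"
        have "\<not> x < M"
        proof
          assume "x < M" then have "lv x < n" "lv' x = lv x" using lv(1) unfolding M_def lv'_def by auto
          then show False using x jn by simp
        qed
        then show "x \<in> {M..<M + s n}" using x by auto
      next
        fix x assume "x \<in> {M..<M + s n}" then show "x \<in> {u. u<M + s n \<and> lv' u = j}"
          unfolding lv'_def using jn by auto
      qed
      then show ?thesis using jn by simp
    qed
  qed
  ultimately show ?case unfolding M_def by auto
qed

lemma rho_le:
  assumes C: "\<forall>J\<subseteq>{..<n}. J \<noteq> {} \<longrightarrow> (\<exists>j\<in>J. card J \<le> s j) \<or> (\<exists>j\<in>J. Suc j\<in>J \<and> card J \<le> s j + s (Suc j))"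
  shows "rho n path_edge \<le> (\<Sum>j<n. s j)"
proof -
  obtain lv where lv: "\<forall>u<(\<Sum>j<n. s j). lv u < n" "\<forall>j<n. card {u. u<(\<Sum>j<n. s j) \<and> lv u = j} = s j"
    using lv_exists by blast
  have "\<exists>E. is_graph (\<Sum>j<n. s j) E \<and> (\<forall>c. proper_coloring (\<Sum>j<n. s j) E c \<longrightarrow> has_rainbow_induced_copy n path_edge (\<Sum>j<n. s j) E c)"
    using main[OF lv C] .
  then show ?thesis unfolding rho_def by (rule Least_le)
qed

definition gs :: "nat \<Rightarrow> nat" where
  "gs j = (if j = 0 then 1 else if 5 \<le> j then j - 1 else j)"

lemma gs_pair1: "1 \<le> m \<Longrightarrow> Suc m \<le> gs (m-1) + gs m"
  unfolding gs_def by auto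

lemma gs_pair2: "5 \<le> m \<Longrightarrow> m \<le> gs (m-3) + gs (m-2)"
  unfolding gs_def by auto

lemma C_gen:
  assumes fin: "finite J" and ne: "J \<noteq> {}"
  shows "(\<exists>j\<in>J. card J \<le> gs j) \<or> (\<exists>j\<in>J. Suc j\<in>J \<and> card J \<le> gs j + gs (Suc j))"
proof -
  define m where "m = Max J"
  have mJ: "m \<in> J" using fin ne m_def by simp
  have sub: "J \<subseteq> {..m}" using fin ne m_def by auto
  have cJ: "card J \<le> Suc m" using card_mono[OF _ sub] by simp
  show ?thesis
  proof (cases "card J \<le> gs m")
    case True then show ?thesis using mJ by blast
  next
    case False
    then have m1: "1 \<le> m" using cJ by (cases m) (auto simp: gs_def)
    show ?thesis
    proof (cases "m - 1 \<in> J")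
      case True
      have "Suc (m - 1) = m" using m1 by simp
      moreover have "card J \<le> gs (m-1) + gs m" using cJ gs_pair1[OF m1] by simp
      ultimately show ?thesis using True mJ by metis
    next
      case notin: False
      have sub2: "J \<subseteq> {..m} - {m-1}" using sub notin by auto
      have c2: "card ({..m} - {m-1}) = m" using m1 by simp
      have cJ2: "card J \<le> m" using card_mono[OF _ sub2] c2 by simp
      have m5: "5 \<le> m" and gm: "gs m = m - 1" using False cJ2 m1 unfolding gs_def by (auto split: if_splits)
      have "card J = m" using False cJ2 gm by simp
      then have Jeq: "J = {..m} - {m-1}" using card_subset_eq[OF _ sub2] c2 by simp
      have a: "m - 3 \<in> J" "m - 2 \<in> J" using Jeq m5 by auto
      have "Suc (m - 3) = m - 2" using m5 by simp
      moreover have "card J \<le> gs (m-3) + gs (m-2)" using \<open>card J = m\<close> gs_pair2[OF m5] by simp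
      ultimately show ?thesis using a by metis
    qed
  qed
qed

lemma gs_sum: "1 \<le> n \<Longrightarrow> 2 * (\<Sum>j<n. gs j) + 2 * (n - 5) = n * (n - 1) + 2"
proof (induction n rule: nat_induct_at_least)
  case base then show ?case by (simp add: gs_def)
next
  case (Suc n)
  have "2 * (\<Sum>j<Suc n. gs j) + 2 * (Suc n - 5) = (2 * (\<Sum>j<n. gs j) + 2 * (n - 5)) + 2 * gs n + 2 * (Suc n - 5) - 2 * (n - 5)"
    by simp
  also have "\<dots> = n * (n - 1) + 2 + 2 * n"
    using Suc unfolding gs_def by auto
  also have "\<dots> = Suc n * (Suc n - 1) + 2"
    using Suc by (cases n) (auto simp: algebra_simps)
  finally show ?case .
qed

definition s7 :: "nat \<Rightarrow> nat" where "s7 j = [1,2,3,4,2,2,4] ! j"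

lemma C7: "\<forall>J\<in>Pow {0,1,2,3,4,5,6::nat}. J \<noteq> {} \<longrightarrow> (\<exists>j\<in>J. card J \<le> s7 j) \<or> (\<exists>j\<in>J. Suc j\<in>J \<and> card J \<le> s7 j + s7 (Suc j))"
  by (simp add: Pow_insert s7_def)

theorem corollary5p2:
  fixes n :: nat
  assumes "n \<ge> 1"
  shows "int (rho n path_edge) \<le> 1 + (int n * (int n - 1)) div 2 - 3 * (int n div 7)"
proof (cases "n = 7")
  case True
  have "{..<7::nat} = {0,1,2,3,4,5,6}" by auto
  then have "rho 7 path_edge \<le> (\<Sum>j<7. s7 j)"
    using C7 by (intro rho_le) auto
  also have "(\<Sum>j<7. s7 j) = 18" by (simp add: s7_def numeral_eq_Suc)
  finally show ?thesis using True by simp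
next
  case False
  have r: "rho n path_edge \<le> (\<Sum>j<n. gs j)"
    by (rule rho_le) (metis C_gen finite_lessThan finite_subset)
  define X where "X = n * (n - 1)"
  have eq: "2 * (\<Sum>j<n. gs j) + 2 * (n - 5) = X + 2" using gs_sum[OF assms] X_def by simp
  have d: "3 * (n div 7) \<le> n - 5" using False assms by presburger
  have "int X = int n * (int n - 1)" using assms X_def by (simp add: of_nat_diff)
  moreover have "int (\<Sum>j<n. gs j) \<le> 1 + int X div 2 - 3 * (int n div 7)"
  proof -
    have "int (\<Sum>j<n. gs j) + int (n - 5) = int X div 2 + 1" using eq by linarith
    moreover have "3 * (int n div 7) \<le> int (n - 5)"
    proof -
      have e: "int n div 7 = int (n div 7)" by (simp add: zdiv_int)
      have "int (3 * (n div 7)) \<le> int (n - 5)" using d by (simp only: of_nat_le_iff)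
      then show ?thesis using e by simp
    qed
    ultimately show ?thesis by linarith
  qed
  ultimately show ?thesis using r by linarith
qed

end
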